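(* Both SW-PAV and IW-PAV can fail SW-JR when an SW-JR committee exists: there exist approval-based SCV instances admitting a committee that satisfies SW-JR, in which a committee maximizing the SW-PAV score does not satisfy SW-JR, and likewise in which a committee maximizing the IW-PAV score does not satisfy SW-JR.
   Context: An approval-based sub-committee voting (SCV) instance consists of a set of voters $N=\{1,\ldots,n\}$, a finite set of candidates $C$ partitioned into candidate subsets $C_1,\ldots,C_\ell$, positive integer quotas $k_j\le |C_j|$ with $k=\sum_{j=1}^\ell k_j$, and approval ballots $A_i\subseteq C$ for $i\in N$. A committee is a set $W\subseteq C$ with $|W\cap C_j|=k_j$ for every $j$. Let $r(0)=0$ and $r(t)=\sum_{p=1}^t 1/p$ for $t\ge1$. The SW-PAV score of $W$ is $\sum_{i\in N} r(|W\cap A_i|)$; the IW-PAV score is $\sum_{j=1}^\ell\sum_{i\in N} r(|W\cap A_i\cap C_j|)$. $W$ satisfies SW-JR if for every $X\subseteq N$ with $|X|\ge n/k$ and $|\bigcap_{i\in X}A_i|\ge 1$ we have $|W\cap \bigcup_{i\in X}A_i|\ge 1$. *)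

theory Defs
  imports Complex_Main
begin

text \<open>An approval-based SCV instance is given by
  n voters (voters are 1..n),
  l candidate subsets Cs 0, ..., Cs (l-1) (a partition of the candidate set C),
  quotas ks 0, ..., ks (l-1), and approval ballots A i for voters i in 1..n.\<close>

definition scv_cands :: "nat \<Rightarrow> (nat \<Rightarrow> nat set) \<Rightarrow> nat set" where
  "scv_cands l Cs = (\<Union>j<l. Cs j)"

definition scv_instance ::
  "nat \<Rightarrow> nat \<Rightarrow> (nat \<Rightarrow> nat set) \<Rightarrow> (nat \<Rightarrow> nat) \<Rightarrow> (nat \<Rightarrow> nat set) \<Rightarrow> bool" where
  "scv_instance n l Cs ks A \<longleftrightarrow>
     n \<ge> 1 \<and> l \<ge> 1 \<and>
     finite (scv_cands l Cs) \<and>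
     (\<forall>j<l. Cs j \<noteq> {}) \<and>
     (\<forall>j<l. \<forall>j'<l. j \<noteq> j' \<longrightarrow> Cs j \<inter> Cs j' = {}) \<and>
     (\<forall>j<l. 0 < ks j \<and> ks j \<le> card (Cs j)) \<and>
     (\<forall>i\<in>{1..n}. A i \<subseteq> scv_cands l Cs)"

definition scv_k :: "nat \<Rightarrow> (nat \<Rightarrow> nat) \<Rightarrow> nat" where
  "scv_k l ks = (\<Sum>j<l. ks j)"

definition committee ::
  "nat \<Rightarrow> (nat \<Rightarrow> nat set) \<Rightarrow> (nat \<Rightarrow> nat) \<Rightarrow> nat set \<Rightarrow> bool" where
  "committee l Cs ks W \<longleftrightarrow> W \<subseteq> scv_cands l Cs \<and> (\<forall>j<l. card (W \<inter> Cs j) = ks j)"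

definition pav_r :: "nat \<Rightarrow> real" where
  "pav_r t = (\<Sum>p=1..t. 1 / real p)"

definition sw_pav :: "nat \<Rightarrow> (nat \<Rightarrow> nat set) \<Rightarrow> nat set \<Rightarrow> real" where
  "sw_pav n A W = (\<Sum>i\<in>{1..n}. pav_r (card (W \<inter> A i)))"

definition iw_pav ::
  "nat \<Rightarrow> nat \<Rightarrow> (nat \<Rightarrow> nat set) \<Rightarrow> (nat \<Rightarrow> nat set) \<Rightarrow> nat set \<Rightarrow> real" where
  "iw_pav n l Cs A W = (\<Sum>j<l. \<Sum>i\<in>{1..n}. pav_r (card (W \<inter> A i \<inter> Cs j)))"

definition sw_jr ::
  "nat \<Rightarrow> nat \<Rightarrow> (nat \<Rightarrow> nat) \<Rightarrow> (nat \<Rightarrow> nat set) \<Rightarrow> nat set \<Rightarrow> bool" where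
  "sw_jr n l ks A W \<longleftrightarrow>
     (\<forall>X \<subseteq> {1..n}. real (card X) \<ge> real n / real (scv_k l ks)
        \<and> card (\<Inter>i\<in>X. A i) \<ge> 1 \<longrightarrow> card (W \<inter> (\<Union>i\<in>X. A i)) \<ge> 1)"

definition sw_pav_max ::
  "nat \<Rightarrow> nat \<Rightarrow> (nat \<Rightarrow> nat set) \<Rightarrow> (nat \<Rightarrow> nat) \<Rightarrow> (nat \<Rightarrow> nat set) \<Rightarrow> nat set \<Rightarrow> bool" where
  "sw_pav_max n l Cs ks A W \<longleftrightarrow> committee l Cs ks W \<and>
     (\<forall>W'. committee l Cs ks W' \<longrightarrow> sw_pav n A W' \<le> sw_pav n A W)"

definition iw_pav_max ::
  "nat \<Rightarrow> nat \<Rightarrow> (nat \<Rightarrow> nat set) \<Rightarrow> (nat \<Rightarrow> nat) \<Rightarrow> (nat \<Rightarrow> nat set) \<Rightarrow> nat set \<Rightarrow> bool" where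
  "iw_pav_max n l Cs ks A W \<longleftrightarrow> committee l Cs ks W \<and>
     (\<forall>W'. committee l Cs ks W' \<longrightarrow> iw_pav n l Cs A W' \<le> iw_pav n l Cs A W)"

end

theory Submission
  imports Defs
begin

definition eCs :: "nat \<Rightarrow> nat set" where
  "eCs j = (if j = 0 then {0} else if j = 1 then {1,2} else {3,4})"
definition eks :: "nat \<Rightarrow> nat" where
  "eks j = (if j = 0 then 1 else if j = 1 then 1 else 2)"
definition eA :: "nat \<Rightarrow> nat set" where
  "eA i = (if i = 1 then {2} else {0,1})"

lemma lt3: "(j::nat) < 3 \<longleftrightarrow> j = 0 \<or> j = 1 \<or> j = 2" by auto
lemma lessThan3: "{..<3::nat} = {0,1,2}" by auto
lemma set14: "{1..4::nat} = {1,2,3,4}" by auto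

lemma cands: "scv_cands 3 eCs = {0,1,2,3,4}"
  unfolding scv_cands_def lessThan3 by (auto simp: eCs_def)

lemma kk: "scv_k 3 eks = 4"
  unfolding scv_k_def lessThan3 by (simp add: eks_def)

lemma r0: "pav_r 0 = 0" by (simp add: pav_r_def)
lemma r1: "pav_r 1 = 1" by (simp add: pav_r_def)
lemma r2: "pav_r 2 = 3/2" by (simp add: pav_r_def numeral_2_eq_2)
lemma r1': "pav_r (Suc 0) = 1" by (simp add: pav_r_def)
lemma r2': "pav_r (Suc (Suc 0)) = 3/2" using r2 by (simp add: numeral_2_eq_2)

lemma inst: "scv_instance 4 3 eCs eks eA"
  unfolding scv_instance_def cands
  by (auto simp: lt3 eCs_def eks_def eA_def)

lemma comm_iff: "committee 3 eCs eks W \<longleftrightarrow> W = {0,1,3,4} \<or> W = {0,2,3,4}"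
proof
  assume c: "committee 3 eCs eks W"
  hence sub: "W \<subseteq> {0,1,2,3,4}" by (simp add: committee_def cands)
  have cc: "\<forall>j<3. card (W \<inter> eCs j) = eks j" using c by (simp add: committee_def)
  have c0: "card (W \<inter> {0}) = 1" using cc[rule_format, of 0] by (simp add: eCs_def eks_def)
  have c1: "card (W \<inter> {1,2}) = 1" using cc[rule_format, of 1] by (simp add: eCs_def eks_def)
  have c2: "card (W \<inter> {3,4}) = 2" using cc[rule_format, of 2] by (simp add: eCs_def eks_def)
  have "0 \<in> W" proof (rule ccontr)
    assume "0 \<notin> W" hence "W \<inter> {0} = {}" by auto
    thus False using c0 by simp
  qed
  moreover have "3 \<in> W \<and> 4 \<in> W"
  proof (rule ccontr)
    assume "\<not> (3 \<in> W \<and> 4 \<in> W)"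
    hence "W \<inter> {3,4} \<subseteq> {3} \<or> W \<inter> {3,4} \<subseteq> {4}" by auto
    hence "card (W \<inter> {3,4}) \<le> 1"
    proof
      assume "W \<inter> {3,4} \<subseteq> {3}" from card_mono[OF _ this] show ?thesis by simp
    next
      assume "W \<inter> {3,4} \<subseteq> {4}" from card_mono[OF _ this] show ?thesis by simp
    qed
    thus False using c2 by simp
  qed
  moreover have "(1 \<in> W) \<noteq> (2 \<in> W)"
  proof
    assume h: "(1 \<in> W) = (2 \<in> W)"
    show False
    proof (cases "1 \<in> W")
      case True
      hence "W \<inter> {1,2} = {1,2}" using h by auto
      thus False using c1 by simp
    next
      case False
      hence "W \<inter> {1,2} = {}" using h by auto
      thus False using c1 by simp
    qed
  qed
  ultimately show "W = {0,1,3,4} \<or> W = {0,2,3,4}"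
  proof (elim conjE)
    assume a: "0 \<in> W" "3 \<in> W" "4 \<in> W" "(1 \<in> W) \<noteq> (2 \<in> W)"
    show ?thesis
    proof (cases "1 \<in> W")
      case True
      have "W = {0,1,3,4}"
      proof (rule set_eqI)
        fix x show "x \<in> W \<longleftrightarrow> x \<in> {0,1,3,4}" using sub a True by blast
      qed
      thus ?thesis ..
    next
      case False
      have "W = {0,2,3,4}"
      proof (rule set_eqI)
        fix x show "x \<in> W \<longleftrightarrow> x \<in> {0,2,3,4}" using sub a False by blast
      qed
      thus ?thesis ..
    qed
  qed
next
  assume "W = {0,1,3,4} \<or> W = {0,2,3,4}"
  thus "committee 3 eCs eks W"
  proof
    assume w: "W = {0,1,3,4}"
    have "W \<inter> {0} = {0}" "W \<inter> {1,2} = {1}" "W \<inter> {3,4} = {3,4}" using w by auto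
    thus ?thesis unfolding committee_def cands lt3 using w by (auto simp: eCs_def eks_def)
  next
    assume w: "W = {0,2,3,4}"
    have "W \<inter> {0} = {0}" "W \<inter> {1,2} = {2}" "W \<inter> {3,4} = {3,4}" using w by auto
    thus ?thesis unfolding committee_def cands lt3 using w by (auto simp: eCs_def eks_def)
  qed
qed

lemma jr_good: "sw_jr 4 3 eks eA {0,2,3,4}"
  unfolding sw_jr_def kk
proof (intro allI impI)
  fix X :: "nat set"
  assume h0: "X \<subseteq> {1..4}" and h: "real 4 / real 4 \<le> real (card X) \<and> 1 \<le> card (\<Inter>i\<in>X. eA i)"
  hence "card X \<ge> 1" by simp
  then obtain i where i: "i \<in> X" by fastforce
  have "{0,2,3,4::nat} \<inter> (\<Union>i\<in>X. eA i) \<noteq> {}" using i by (auto simp: eA_def split: if_splits)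
  moreover have "finite ({0,2,3,4::nat} \<inter> (\<Union>i\<in>X. eA i))" by simp
  ultimately show "1 \<le> card ({0,2,3,4} \<inter> (\<Union>i\<in>X. eA i))"
    by (simp add: Suc_leI card_gt_0_iff)
qed

lemma jr_bad: "\<not> sw_jr 4 3 eks eA {0,1,3,4}"
  unfolding sw_jr_def kk
proof
  assume h: "\<forall>X\<subseteq>{1..4}. real 4 / real 4 \<le> real (card X) \<and> 1 \<le> card (\<Inter> (eA ` X)) \<longrightarrow>
         1 \<le> card ({0,1,3,4} \<inter> \<Union> (eA ` X))"
  have "1 \<le> card ({0,1,3,4::nat} \<inter> \<Union> (eA ` {1}))"
    using h[rule_format, of "{1}"] by (simp add: eA_def)
  thus False by (simp add: eA_def)
qed

lemma sw1: "sw_pav 4 eA {0,1,3,4} = 9/2"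
  unfolding sw_pav_def set14 by (simp add: eA_def r0 r1 r2 r1' r2')
lemma sw2: "sw_pav 4 eA {0,2,3,4} = 4"
  unfolding sw_pav_def set14 by (simp add: eA_def r0 r1 r2 r1' r2')
lemma iw1: "iw_pav 4 3 eCs eA {0,1,3,4} = 6"
  unfolding iw_pav_def set14 lessThan3 by (simp add: eA_def eCs_def r0 r1 r2 r1' r2')
lemma iw2: "iw_pav 4 3 eCs eA {0,2,3,4} = 4"
  unfolding iw_pav_def set14 lessThan3 by (simp add: eA_def eCs_def r0 r1 r2 r1' r2')

theorem mainTheorem11:
  shows "(\<exists>n l Cs ks A. scv_instance n l Cs ks A
            \<and> (\<exists>W. committee l Cs ks W \<and> sw_jr n l ks A W)
            \<and> (\<forall>W. sw_pav_max n l Cs ks A W \<longrightarrow> \<not> sw_jr n l ks A W))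
       \<and> (\<exists>n l Cs ks A. scv_instance n l Cs ks A
            \<and> (\<exists>W. committee l Cs ks W \<and> sw_jr n l ks A W)
            \<and> (\<forall>W. iw_pav_max n l Cs ks A W \<longrightarrow> \<not> sw_jr n l ks A W))"
proof (intro conjI)
  have good: "\<exists>W. committee 3 eCs eks W \<and> sw_jr 4 3 eks eA W"
    using jr_good comm_iff by blast
  have m1: "\<forall>W. sw_pav_max 4 3 eCs eks eA W \<longrightarrow> \<not> sw_jr 4 3 eks eA W"
  proof (intro allI impI)
    fix W assume m: "sw_pav_max 4 3 eCs eks eA W"
    hence "W = {0,1,3,4} \<or> W = {0,2,3,4}" by (simp add: sw_pav_max_def comm_iff)
    moreover have "W \<noteq> {0,2,3,4}"
    proof
      assume "W = {0,2,3,4}"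
      hence "sw_pav 4 eA {0,1,3,4} \<le> sw_pav 4 eA {0,2,3,4}"
        using m by (simp add: sw_pav_max_def comm_iff)
      thus False using sw1 sw2 by linarith
    qed
    ultimately show "\<not> sw_jr 4 3 eks eA W" using jr_bad by auto
  qed
  have m2: "\<forall>W. iw_pav_max 4 3 eCs eks eA W \<longrightarrow> \<not> sw_jr 4 3 eks eA W"
  proof (intro allI impI)
    fix W assume m: "iw_pav_max 4 3 eCs eks eA W"
    hence "W = {0,1,3,4} \<or> W = {0,2,3,4}" by (simp add: iw_pav_max_def comm_iff)
    moreover have "W \<noteq> {0,2,3,4}"
    proof
      assume "W = {0,2,3,4}"
      hence "iw_pav 4 3 eCs eA {0,1,3,4} \<le> iw_pav 4 3 eCs eA {0,2,3,4}"
        using m by (simp add: iw_pav_max_def comm_iff)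
      thus False using iw1 iw2 by linarith
    qed
    ultimately show "\<not> sw_jr 4 3 eks eA W" using jr_bad by auto
  qed
  show "\<exists>n l Cs ks A. scv_instance n l Cs ks A
            \<and> (\<exists>W. committee l Cs ks W \<and> sw_jr n l ks A W)
            \<and> (\<forall>W. sw_pav_max n l Cs ks A W \<longrightarrow> \<not> sw_jr n l ks A W)"
    using inst good m1 by blast
  show "\<exists>n l Cs ks A. scv_instance n l Cs ks A
            \<and> (\<exists>W. committee l Cs ks W \<and> sw_jr n l ks A W)
            \<and> (\<forall>W. iw_pav_max n l Cs ks A W \<longrightarrow> \<not> sw_jr n l ks A W)"
    using inst good m2 by blast
qed

end
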